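(* Let $\Omega$ be as in the context and suppose $\Omega$ is nonempty and bounded, $0\notin\Omega$, and $\Omega\cap\mathcal{R}\neq\emptyset$. Consider $$\text{(P)}\quad \min\{\langle\overline{C},Y\rangle : Y\in\Omega\cap\mathcal{R}\}\qquad\text{and}\qquad \text{(P}_\rho)\quad \min\{\langle\overline{C},Y\rangle+\rho\operatorname{rank}(Y) : Y\in\Omega\}.$$ Then there exists $\overline{\rho}>0$ such that for every $\rho\ge\overline{\rho}$ the set of global optimal solutions of (P$_\rho$) coincides with the set of global optimal solutions of (P).
   Context: $\mathcal{S}^q$ is the space of real symmetric $q\times q$ matrices with trace inner product $\langle P,Q\rangle=\operatorname{tr}(PQ)$; $\mathcal{S}^q_+$ the positive semidefinite cone; $\mathcal{N}^q$ the entrywise nonnegative matrices in $\mathcal{S}^q$. Given $\overline{C}\in\mathcal{S}^q$, a linear map $\mathcal{A}:\mathcal{S}^q\to\mathbb{R}^m$ and $b\in\mathbb{R}^m$, set $\Omega:=\{Y\in\mathcal{S}^q_+\cap\mathcal{N}^q : \mathcal{A}(Y)=b\}$ and $\mathcal{R}:=\{Y\in\mathcal{S}^q:\operatorname{rank}(Y)\le1\}$. *)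

theory Defs
  imports "HOL-Analysis.Analysis"
begin

text \<open>Real q x q matrices are modelled as real^'q^'q (q = CARD('q)).\<close>

definition sym_mat :: "real^'q^'q \<Rightarrow> bool" where
  "sym_mat Y \<longleftrightarrow> transpose Y = Y"

definition psd_mat :: "real^'q^'q \<Rightarrow> bool" where
  "psd_mat Y \<longleftrightarrow> sym_mat Y \<and> (\<forall>x. 0 \<le> x \<bullet> (Y *v x))"

definition nonneg_mat :: "real^'q^'q \<Rightarrow> bool" where
  "nonneg_mat Y \<longleftrightarrow> (\<forall>i j. 0 \<le> Y $ i $ j)"

definition tr_inner :: "real^'q^'q \<Rightarrow> real^'q^'q \<Rightarrow> real" where
  "tr_inner P Q = trace (P ** Q)"

definition Omega_set :: "(real^'q^'q \<Rightarrow> real^'m) \<Rightarrow> real^'m \<Rightarrow> (real^'q^'q) set" where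
  "Omega_set Aop b = {Y. psd_mat Y \<and> nonneg_mat Y \<and> Aop Y = b}"

definition rank_le1_set :: "(real^'q^'q) set" where
  "rank_le1_set = {Y. sym_mat Y \<and> rank Y \<le> 1}"

definition global_opt_set :: "('a \<Rightarrow> real) \<Rightarrow> 'a set \<Rightarrow> 'a set" where
  "global_opt_set f S = {Y \<in> S. \<forall>Z\<in>S. f Y \<le> f Z}"

end

theory Submission
  imports Defs
begin

lemma tr_inner_linear: "linear (\<lambda>Y. tr_inner (C::real^'q^'q) Y)"
  by (rule linearI)
     (simp_all add: tr_inner_def trace_def matrix_matrix_mult_def sum_distrib_left
        sum.distrib algebra_simps)

theorem theorem4:
  fixes Cbar :: "real^'q^'q" and Aop :: "real^'q^'q \<Rightarrow> real^'m" and b :: "real^'m"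
  assumes "sym_mat Cbar"
    and "linear Aop"
    and "Omega_set Aop b \<noteq> {}"
    and "bounded (Omega_set Aop b)"
    and "0 \<notin> Omega_set Aop b"
    and "Omega_set Aop b \<inter> rank_le1_set \<noteq> {}"
  shows "\<exists>rho_bar > 0. \<forall>rho \<ge> rho_bar.
           global_opt_set (\<lambda>Y. tr_inner Cbar Y + rho * real (rank Y)) (Omega_set Aop b)
         = global_opt_set (\<lambda>Y. tr_inner Cbar Y) (Omega_set Aop b \<inter> rank_le1_set)"
proof -
  let ?O = "Omega_set Aop b"
  let ?f = "\<lambda>Y. tr_inner Cbar Y"
  have "bounded (?f ` ?O)"
    by (rule bounded_linear_image[OF assms(4)])
       (use tr_inner_linear linear_conv_bounded_linear in auto)
  then obtain M where M: "\<And>Y. Y \<in> ?O \<Longrightarrow> \<bar>?f Y\<bar> \<le> M"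
    unfolding bounded_iff by fastforce
  obtain Z0 where Z0: "Z0 \<in> ?O" "Z0 \<in> rank_le1_set" using assms(6) by blast
  have M0: "0 \<le> M" using M[OF Z0(1)] by linarith
  have rk1: "rank Y \<ge> 1" if "Y \<in> ?O" for Y
    using that assms(5) rank_eq_0[of Y] by (cases "rank Y") auto
  have symO: "sym_mat Y" if "Y \<in> ?O" for Y
    using that by (simp add: Omega_set_def psd_mat_def)
  show ?thesis
  proof (intro exI[of _ "2*M+1"] conjI allI impI)
    show "0 < 2*M+1" using M0 by simp
    fix rho :: real assume rho: "2*M+1 \<le> rho"
    have big: "?f Z0 + rho < ?f Y + rho * real (rank Y)" if "Y \<in> ?O" "rank Y \<ge> 2" for Y
    proof -
      have "rho * 2 \<le> rho * real (rank Y)" using that rho M0 by (intro mult_left_mono) auto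
      thus ?thesis using M[OF that(1)] M[OF Z0(1)] rho by linarith
    qed
    have inR: "Y \<in> rank_le1_set \<longleftrightarrow> rank Y = 1" if "Y \<in> ?O" for Y
      using rk1[OF that] symO[OF that] by (auto simp: rank_le1_set_def)
    have Z0r: "rank Z0 = 1" using inR Z0 by blast
    show "global_opt_set (\<lambda>Y. ?f Y + rho * real (rank Y)) ?O
         = global_opt_set ?f (?O \<inter> rank_le1_set)"
    proof (intro equalityI subsetI)
      fix Y assume Y: "Y \<in> global_opt_set (\<lambda>Y. ?f Y + rho * real (rank Y)) ?O"
      hence YO: "Y \<in> ?O" and Yle: "\<And>Z. Z \<in> ?O \<Longrightarrow> ?f Y + rho * real (rank Y) \<le> ?f Z + rho * real (rank Z)"
        by (auto simp: global_opt_set_def)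
      have "\<not> rank Y \<ge> 2" using big[OF YO] Yle[OF Z0(1)] Z0r by force
      hence rY: "rank Y = 1" using rk1[OF YO] by linarith
      show "Y \<in> global_opt_set ?f (?O \<inter> rank_le1_set)"
        unfolding global_opt_set_def
      proof (intro CollectI conjI ballI)
        show "Y \<in> ?O \<inter> rank_le1_set" using YO rY inR by blast
        fix Z assume "Z \<in> ?O \<inter> rank_le1_set"
        hence "Z \<in> ?O" "rank Z = 1" using inR by auto
        thus "?f Y \<le> ?f Z" using Yle[of Z] rY by simp
      qed
    next
      fix Y assume Y: "Y \<in> global_opt_set ?f (?O \<inter> rank_le1_set)"
      hence YO: "Y \<in> ?O" and YR: "Y \<in> rank_le1_set" and
        Yle: "\<And>Z. Z \<in> ?O \<Longrightarrow> Z \<in> rank_le1_set \<Longrightarrow> ?f Y \<le> ?f Z"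
        by (auto simp: global_opt_set_def)
      have rY: "rank Y = 1" using inR YO YR by blast
      show "Y \<in> global_opt_set (\<lambda>Y. ?f Y + rho * real (rank Y)) ?O"
        unfolding global_opt_set_def
      proof (intro CollectI conjI ballI)
        show "Y \<in> ?O" by fact
        fix Z assume ZO: "Z \<in> ?O"
        show "?f Y + rho * real (rank Y) \<le> ?f Z + rho * real (rank Z)"
        proof (cases "rank Z \<ge> 2")
          case True
          have "?f Y \<le> ?f Z0" using Yle Z0 by blast
          thus ?thesis using big[OF ZO True] rY by simp
        next
          case False
          hence "rank Z = 1" using rk1[OF ZO] by linarith
          thus ?thesis using Yle[OF ZO] inR[OF ZO] rY by simp
        qed
      qed
    qed
  qed
qed

end
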